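(* Let $a_{n,0}$ denote the number of matchings of size $n$ with no occurrence of the endhered pattern $21$. Then $a_{1,0}=1$, $a_{2,0}=2$, and for all $n\ge2$, $$a_{n+1,0}=2n\,a_{n,0}+2(n-1)\,a_{n-1,0}.$$
   Context: A matching of size $n$ is a set of $n$ arcs $(a,b)$ with $1\le a<b\le 2n$ such that each point of $\{1,\dots,2n\}$ belongs to exactly one arc. An occurrence of the endhered pattern $21$ in a matching $\mu$ is a pair of arcs of $\mu$ of the form $(i+1,j+2),(i+2,j+1)$ (two nested arcs with consecutive starting points and consecutive ending points). *)

theory Defs
  imports Main
begin

definition matchings :: "nat \<Rightarrow> (nat \<times> nat) set set" where
  "matchings n = {M. M \<subseteq> {(a, b). 1 \<le> a \<and> a < b \<and> b \<le> 2 * n}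
      \<and> card M = n
      \<and> (\<forall>p \<in> {1..2 * n}. \<exists>!e. e \<in> M \<and> (fst e = p \<or> snd e = p))}"

definition has_endhered_21 :: "(nat \<times> nat) set \<Rightarrow> bool" where
  "has_endhered_21 M \<longleftrightarrow> (\<exists>i j. (i + 1, j + 2) \<in> M \<and> (i + 2, j + 1) \<in> M)"

definition a0 :: "nat \<Rightarrow> nat" where
  "a0 n = card {M \<in> matchings n. \<not> has_endhered_21 M}"

end

theory Submission
  imports Defs
begin

definition wfm :: "(nat \<times> nat) set \<Rightarrow> bool" where
  "wfm M \<longleftrightarrow> (\<forall>(a,b)\<in>M. 1 \<le> a \<and> a < b) \<and>
     (\<forall>(a,b)\<in>M. \<forall>(a',b')\<in>M. (a = a' \<or> a = b' \<or> b = a' \<or> b = b') \<longrightarrow> a = a' \<and> b = b')"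

definition pts :: "(nat \<times> nat) set \<Rightarrow> nat set" where
  "pts M = fst ` M \<union> snd ` M"

lemma card_pts:
  assumes "wfm M" "finite M" shows "card (pts M) = 2 * card M"
proof -
  have i1: "inj_on fst M" using assms(1) unfolding wfm_def inj_on_def by fastforce
  have i2: "inj_on snd M" using assms(1) unfolding wfm_def inj_on_def by fastforce
  have d: "fst ` M \<inter> snd ` M = {}" using assms(1) unfolding wfm_def by fastforce
  have "card (pts M) = card (fst ` M) + card (snd ` M)"
    unfolding pts_def using d assms(2) by (simp add: card_Un_disjoint)
  also have "\<dots> = 2 * card M" using i1 i2 by (simp add: card_image)
  finally show ?thesis .
qed

lemma matchings_iff: "M \<in> matchings n \<longleftrightarrow> wfm M \<and> pts M = {1..2*n}"
proof
  assume M: "M \<in> matchings n"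
  hence sub: "M \<subseteq> {(a, b). 1 \<le> a \<and> a < b \<and> b \<le> 2 * n}"
    and ex: "\<forall>p \<in> {1..2 * n}. \<exists>!e. e \<in> M \<and> (fst e = p \<or> snd e = p)"
    unfolding matchings_def by auto
  have w1: "\<forall>(a,b)\<in>M. 1 \<le> a \<and> a < b" using sub by auto
  have w2: "a = a' \<and> b = b'" if "(a,b)\<in>M" "(a',b')\<in>M" "a = a' \<or> a = b' \<or> b = a' \<or> b = b'" for a b a' b'
  proof -
    have bb: "a \<in> {1..2*n}" "b \<in> {1..2*n}" using sub that(1) by auto
    show ?thesis
    proof (cases "a = a' \<or> a = b'")
      case True
      then show ?thesis using ex[rule_format, OF bb(1)] that(1,2) by (metis fst_conv prod.inject snd_conv)
    next
      case False
      then show ?thesis using ex[rule_format, OF bb(2)] that by (metis fst_conv prod.inject snd_conv)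
    qed
  qed
  have "wfm M" unfolding wfm_def using w1 w2 by blast
  moreover have "pts M = {1..2*n}"
  proof
    show "pts M \<subseteq> {1..2*n}" using sub unfolding pts_def by force
    show "{1..2*n} \<subseteq> pts M"
    proof
      fix p assume "p \<in> {1..2*n}"
      then obtain e where "e \<in> M" "fst e = p \<or> snd e = p" using ex by blast
      thus "p \<in> pts M" unfolding pts_def by blast
    qed
  qed
  ultimately show "wfm M \<and> pts M = {1..2*n}" by blast
next
  assume A: "wfm M \<and> pts M = {1..2*n}"
  have fin: "finite M"
  proof (rule finite_subset)
    show "M \<subseteq> pts M \<times> pts M" unfolding pts_def by force
    show "finite (pts M \<times> pts M)" using A by simp
  qed
  have sub: "M \<subseteq> {(a, b). 1 \<le> a \<and> a < b \<and> b \<le> 2 * n}"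
  proof
    fix e assume e: "e \<in> M"
    obtain a b where eab: "e = (a,b)" by force
    have "b \<in> pts M" using e eab unfolding pts_def by force
    thus "e \<in> {(a, b). 1 \<le> a \<and> a < b \<and> b \<le> 2 * n}" using A e eab unfolding wfm_def by auto
  qed
  have "card M = n" using card_pts[OF _ fin] A by simp
  moreover have "\<forall>p \<in> {1..2 * n}. \<exists>!e. e \<in> M \<and> (fst e = p \<or> snd e = p)"
  proof
    fix p assume "p \<in> {1..2*n}"
    hence "p \<in> pts M" using A by simp
    then obtain e where e: "e \<in> M" "fst e = p \<or> snd e = p" unfolding pts_def by blast
    moreover have "e' = e" if "e' \<in> M" "fst e' = p \<or> snd e' = p" for e'
    proof -
      obtain a b where ab: "e = (a,b)" by force
      obtain a' b' where ab': "e' = (a',b')" by force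
      have "a = a' \<or> a = b' \<or> b = a' \<or> b = b'" using e that ab ab' by auto
      thus ?thesis using A e that ab ab' unfolding wfm_def by blast
    qed
    ultimately show "\<exists>!e. e \<in> M \<and> (fst e = p \<or> snd e = p)" by blast
  qed
  ultimately show "M \<in> matchings n" unfolding matchings_def using sub by blast
qed

lemma finite_matchings: "finite (matchings n)"
proof (rule finite_subset)
  show "matchings n \<subseteq> Pow ({1..2*n} \<times> {1..2*n})" unfolding matchings_def by auto
qed simp

definition oc :: "(nat \<times> nat) set \<Rightarrow> nat \<Rightarrow> nat \<Rightarrow> bool" where
  "oc M x y \<longleftrightarrow> (x,y) \<in> M \<and> (Suc x, y - 1) \<in> M"

lemma h_iff: assumes "wfm M" shows "has_endhered_21 M \<longleftrightarrow> (\<exists>x y. oc M x y)"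
proof
  assume "has_endhered_21 M"
  then obtain i j where "(i + 1, j + 2) \<in> M \<and> (i + 2, j + 1) \<in> M" unfolding has_endhered_21_def by blast
  hence "oc M (i+1) (j+2)" unfolding oc_def by simp
  thus "\<exists>x y. oc M x y" by blast
next
  assume "\<exists>x y. oc M x y"
  then obtain x y where o: "(x,y) \<in> M" "(Suc x, y - 1) \<in> M" unfolding oc_def by blast
  have "1 \<le> x" "Suc x < y - 1" using o assms unfolding wfm_def by auto
  hence e1: "x - 1 + 1 = x" "y - 2 + 2 = y" "x - 1 + 2 = Suc x" "y - 2 + 1 = y - 1" by auto
  hence "(x - 1 + 1, y - 2 + 2) \<in> M \<and> (x - 1 + 2, y - 2 + 1) \<in> M" using o by simp
  thus "has_endhered_21 M" unfolding has_endhered_21_def by blast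
qed


definition emb :: "nat \<Rightarrow> nat \<Rightarrow> nat \<Rightarrow> nat" where
  "emb c d x = (if x < c then x else if Suc x < d then Suc x else Suc (Suc x))"
definition dn :: "nat \<Rightarrow> nat \<Rightarrow> nat \<Rightarrow> nat" where
  "dn c d x = (if x < c then x else if x < d then x - 1 else x - 2)"
definition ins :: "nat \<Rightarrow> nat \<Rightarrow> (nat \<times> nat) set \<Rightarrow> (nat \<times> nat) set" where
  "ins c d N = insert (c,d) ((\<lambda>(x,y). (emb c d x, emb c d y)) ` N)"
definition rem :: "nat \<Rightarrow> nat \<Rightarrow> (nat \<times> nat) set \<Rightarrow> (nat \<times> nat) set" where
  "rem c d M = (\<lambda>(x,y). (dn c d x, dn c d y)) ` (M - {(c,d)})"

lemma emb_mono: "c < d \<Longrightarrow> emb c d x < emb c d y \<longleftrightarrow> x < y"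
  unfolding emb_def by auto
lemma emb_inj: "c < d \<Longrightarrow> emb c d x = emb c d y \<longleftrightarrow> x = y"
  unfolding emb_def by auto
lemma emb_ne: "c < d \<Longrightarrow> emb c d x \<noteq> c" "c < d \<Longrightarrow> emb c d x \<noteq> d"
  unfolding emb_def by auto
lemma emb_ne': "c < d \<Longrightarrow> c \<noteq> emb c d x" "c < d \<Longrightarrow> d \<noteq> emb c d x"
  unfolding emb_def by auto
lemma dn_emb: "c < d \<Longrightarrow> dn c d (emb c d x) = x"
  unfolding emb_def dn_def by auto
lemma emb_dn: "c < d \<Longrightarrow> y \<noteq> c \<Longrightarrow> y \<noteq> d \<Longrightarrow> emb c d (dn c d y) = y"
  unfolding emb_def dn_def by auto
lemma emb_succ: "c < d \<Longrightarrow> emb c d x' = Suc (emb c d x) \<Longrightarrow> x' = Suc x"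
  unfolding emb_def by (auto split: if_splits)

lemma emb_range: assumes "1 \<le> c" "c < d" "d \<le> 2 * n + 2"
  shows "emb c d ` {1..2*n} = {1..2*n+2} - {c,d}"
proof
  show "emb c d ` {1..2*n} \<subseteq> {1..2*n+2} - {c,d}" using assms unfolding emb_def by auto
  show "{1..2*n+2} - {c,d} \<subseteq> emb c d ` {1..2*n}"
  proof
    fix y assume y: "y \<in> {1..2*n+2} - {c,d}"
    hence "emb c d (dn c d y) = y" using emb_dn assms by auto
    moreover have "dn c d y \<in> {1..2*n}" using y assms unfolding dn_def by auto
    ultimately show "y \<in> emb c d ` {1..2*n}" by force
  qed
qed

lemma ins_matching: assumes N: "N \<in> matchings n" and cd: "1 \<le> c" "c < d" "d \<le> 2 * n + 2"
  shows "ins c d N \<in> matchings (Suc n)"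
proof -
  have w: "wfm N" and p: "pts N = {1..2*n}" using N matchings_iff by auto
  let ?f = "\<lambda>(x,y). (emb c d x, emb c d y)"
  have "pts (ins c d N) = {c,d} \<union> emb c d ` pts N"
    unfolding pts_def ins_def by force
  also have "\<dots> = {1..2*Suc n}" using emb_range[OF cd] p cd by auto
  finally have P: "pts (ins c d N) = {1..2*Suc n}" .
  have W1: "\<forall>(a,b)\<in>ins c d N. 1 \<le> a \<and> a < b"
  proof
    fix e assume "e \<in> ins c d N"
    then consider "e = (c,d)" | x y where "(x,y) \<in> N" "e = (emb c d x, emb c d y)"
      unfolding ins_def by auto
    thus "case e of (a,b) \<Rightarrow> 1 \<le> a \<and> a < b"
    proof cases
      case 1 thus ?thesis using cd by auto
    next
      case 2
      hence "1 \<le> x" "x < y" using w unfolding wfm_def by auto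
      thus ?thesis using 2 emb_mono[OF cd(2)] unfolding emb_def by auto
    qed
  qed
  have W2: "\<forall>(a,b)\<in>ins c d N. \<forall>(a',b')\<in>ins c d N. (a = a' \<or> a = b' \<or> b = a' \<or> b = b') \<longrightarrow> a = a' \<and> b = b'"
  proof (intro ballI, clarify)
    fix a b a' b'
    assume e1: "(a,b) \<in> ins c d N" and e2: "(a',b') \<in> ins c d N" and sh: "a = a' \<or> a = b' \<or> b = a' \<or> b = b'"
    from e1 consider "(a,b) = (c,d)" | x y where "(x,y) \<in> N" "a = emb c d x" "b = emb c d y"
      unfolding ins_def by auto
    note c1 = this
    from e2 consider "(a',b') = (c,d)" | x' y' where "(x',y') \<in> N" "a' = emb c d x'" "b' = emb c d y'"
      unfolding ins_def by auto
    note c2 = this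
    show "a = a' \<and> b = b'"
    proof (cases rule: c1)
      case 1
      then show ?thesis
        by (cases rule: c2) (use sh emb_ne[OF cd(2)] emb_ne'[OF cd(2)] in auto)
    next
      case (2 x y)
      note xy = 2
      show ?thesis
      proof (cases rule: c2)
        case 1
        then show ?thesis using sh xy emb_ne[OF cd(2)] emb_ne'[OF cd(2)] by auto
      next
        case (2 x' y')
        have "x = x' \<or> x = y' \<or> y = x' \<or> y = y'" using sh xy 2 emb_inj[OF cd(2)] by auto
        hence "x = x' \<and> y = y'" using w xy(1) 2(1) unfolding wfm_def by blast
        thus ?thesis using xy 2 by simp
      qed
    qed
  qed
  show ?thesis using W1 W2 P matchings_iff wfm_def by blast
qed


lemma rem_ins: assumes "c < d" shows "rem c d (ins c d N) = N"
proof -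
  have "ins c d N - {(c,d)} = (\<lambda>(x,y). (emb c d x, emb c d y)) ` N"
    unfolding ins_def using emb_ne[OF assms] by auto
  hence "rem c d (ins c d N) = (\<lambda>(x,y). (dn c d x, dn c d y)) ` (\<lambda>(x,y). (emb c d x, emb c d y)) ` N"
    unfolding rem_def by simp
  also have "\<dots> = (\<lambda>(x,y). (dn c d (emb c d x), dn c d (emb c d y))) ` N"
    by (simp add: image_image case_prod_beta)
  also have "\<dots> = N" using dn_emb[OF assms] by (simp add: case_prod_beta)
  finally show ?thesis .
qed

lemma ins_rem: assumes w: "wfm M" and cd: "(c,d) \<in> M" shows "ins c d (rem c d M) = M"
proof -
  have cd': "c < d" using w cd unfolding wfm_def by auto
  have avoid: "x \<noteq> c \<and> x \<noteq> d \<and> y \<noteq> c \<and> y \<noteq> d" if "(x,y) \<in> M - {(c,d)}" for x y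
    using w cd that unfolding wfm_def by blast
  have "(\<lambda>(x,y). (emb c d x, emb c d y)) ` rem c d M
      = (\<lambda>(x,y). (emb c d (dn c d x), emb c d (dn c d y))) ` (M - {(c,d)})"
    unfolding rem_def by (simp add: image_image case_prod_beta)
  also have "\<dots> = M - {(c,d)}"
  proof (rule image_cong[THEN trans, OF refl])
    show "(case p of (x, y) \<Rightarrow> (emb c d (dn c d x), emb c d (dn c d y))) = id p" if "p \<in> M - {(c,d)}" for p
      using avoid[of "fst p" "snd p"] that emb_dn[OF cd'] by (cases p) auto
  qed simp
  finally show ?thesis unfolding ins_def using cd by auto
qed

lemma rem_matching: assumes M: "M \<in> matchings (Suc n)" and cd: "(c,d) \<in> M"
  shows "rem c d M \<in> matchings n"
proof -
  have w: "wfm M" and p: "pts M = {1..2*Suc n}" using M matchings_iff by auto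
  have cd': "1 \<le> c" "c < d" "d \<le> 2 * n + 2" using w cd p unfolding wfm_def pts_def by force+
  define N where "N = rem c d M"
  have MN: "M = ins c d N" using ins_rem[OF w cd] N_def by simp
  let ?E = "\<lambda>(x,y). (emb c d x, emb c d y)"
  have inE: "(emb c d x, emb c d y) \<in> M" if "(x,y) \<in> N" for x y
    using that MN unfolding ins_def by auto
  have W1: "\<forall>(a,b)\<in>N. 1 \<le> a \<and> a < b"
  proof (clarify)
    fix a b assume ab: "(a,b) \<in> N"
    hence "1 \<le> emb c d a" "emb c d a < emb c d b" using inE[OF ab] w unfolding wfm_def by auto
    thus "1 \<le> a \<and> a < b" using emb_mono[OF cd'(2)] cd'(1) unfolding emb_def by (auto split: if_splits)
  qed
  have W2: "\<forall>(a,b)\<in>N. \<forall>(a',b')\<in>N. (a = a' \<or> a = b' \<or> b = a' \<or> b = b') \<longrightarrow> a = a' \<and> b = b'"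
  proof (intro ballI, clarify)
    fix a b a' b' assume ab: "(a,b) \<in> N" and ab': "(a',b') \<in> N" and sh: "a = a' \<or> a = b' \<or> b = a' \<or> b = b'"
    have "emb c d a = emb c d a' \<and> emb c d b = emb c d b'"
      using w inE[OF ab] inE[OF ab'] sh unfolding wfm_def by fast
    thus "a = a' \<and> b = b'" using emb_inj[OF cd'(2)] by blast
  qed
  have "pts M = {c,d} \<union> emb c d ` pts N" unfolding MN pts_def ins_def by force
  moreover have "c \<notin> emb c d ` pts N" "d \<notin> emb c d ` pts N" using emb_ne'[OF cd'(2)] by auto
  ultimately have "emb c d ` pts N = {1..2*n+2} - {c,d}" using p by auto
  also have "\<dots> = emb c d ` {1..2*n}" using emb_range[OF cd'] by simp
  finally have "pts N = {1..2*n}"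
    using inj_image_eq_iff[of "emb c d"] emb_inj[OF cd'(2)] unfolding inj_def by blast
  thus ?thesis using W1 W2 N_def matchings_iff wfm_def by blast
qed

lemma ins_bij: assumes cd: "1 \<le> c" "c < d" "d \<le> 2 * n + 2"
  shows "bij_betw (ins c d) (matchings n) {M \<in> matchings (Suc n). (c,d) \<in> M}"
proof (rule bij_betw_byWitness[where f' = "rem c d"])
  show "\<forall>a\<in>matchings n. rem c d (ins c d a) = a" using rem_ins[OF cd(2)] by simp
  show "\<forall>a'\<in>{M \<in> matchings (Suc n). (c, d) \<in> M}. ins c d (rem c d a') = a'"
    using ins_rem matchings_iff by blast
  show "ins c d ` matchings n \<subseteq> {M \<in> matchings (Suc n). (c, d) \<in> M}"
    using ins_matching[OF _ cd] unfolding ins_def by auto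
  show "rem c d ` {M \<in> matchings (Suc n). (c, d) \<in> M} \<subseteq> matchings n"
    using rem_matching by blast
qed


lemma arc_bounds: "N \<in> matchings n \<Longrightarrow> (x,y) \<in> N \<Longrightarrow> 1 \<le> x \<and> x < y \<and> y \<le> 2 * n"
  unfolding matchings_def by auto

lemma arc_disj: "N \<in> matchings n \<Longrightarrow> (x,y) \<in> N \<Longrightarrow> (x',y') \<in> N \<Longrightarrow>
   x = x' \<or> x = y' \<or> y = x' \<or> y = y' \<Longrightarrow> x = x' \<and> y = y'"
  using matchings_iff[of N n] unfolding wfm_def by blast

lemma key1:
  assumes N: "N \<in> matchings n" and a: "1 \<le> a" "a \<le> 2 * n + 1"
  shows "(\<exists>X Y. oc (ins a (2*n+2) N) X Y) \<longleftrightarrow> ((a, 2*n) \<in> N \<or> (\<exists>x y. oc N x y \<and> a \<noteq> Suc x \<and> a \<noteq> y))"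
proof
  let ?M = "ins a (2*n+2) N"
  have E: "emb a (2*n+2) x = (if x < a then x else Suc x)" if "x \<le> 2*n" for x
    using that unfolding emb_def by auto
  assume "\<exists>X Y. oc ?M X Y"
  then obtain X Y where o1: "(X,Y) \<in> ?M" and o2: "(Suc X, Y - 1) \<in> ?M" unfolding oc_def by blast
  from o1 consider "X = a" "Y = 2*n+2" | x y where "(x,y) \<in> N" "X = emb a (2*n+2) x" "Y = emb a (2*n+2) y"
    unfolding ins_def by auto
  thus "(a, 2*n) \<in> N \<or> (\<exists>x y. oc N x y \<and> a \<noteq> Suc x \<and> a \<noteq> y)"
  proof cases
    case 1
    with o2 obtain x y where xy: "(x,y) \<in> N" "Suc a = emb a (2*n+2) x" "2*n+1 = emb a (2*n+2) y"
      unfolding ins_def by auto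
    have "x = a" "y = 2*n" using xy arc_bounds[OF N xy(1)] E[of x] E[of y] by (auto split: if_splits)
    thus ?thesis using xy by simp
  next
    case (2 x y)
    have bx: "1 \<le> x" "x < y" "y \<le> 2*n" using arc_bounds[OF N 2(1)] by auto
    from o2 2 bx E[of y] have "\<exists>x' y'. (x',y') \<in> N \<and> Suc X = emb a (2*n+2) x' \<and> Y - 1 = emb a (2*n+2) y'"
      unfolding ins_def by (auto split: if_splits)
    then obtain x' y' where x'y': "(x',y') \<in> N" "Suc X = emb a (2*n+2) x'" "Y - 1 = emb a (2*n+2) y'" by blast
    have bx': "1 \<le> x'" "x' < y'" "y' \<le> 2*n" using arc_bounds[OF N x'y'(1)] by auto
    have "x' = Suc x" "y' = y - 1" "a \<noteq> Suc x" "a \<noteq> y"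
      using x'y' 2 bx bx' E[of x] E[of y] E[of x'] E[of y'] by (auto split: if_splits)
    hence "oc N x y \<and> a \<noteq> Suc x \<and> a \<noteq> y" using 2 x'y' unfolding oc_def by simp
    thus ?thesis by blast
  qed
next
  let ?M = "ins a (2*n+2) N"
  have E: "emb a (2*n+2) x = (if x < a then x else Suc x)" if "x \<le> 2*n" for x
    using that unfolding emb_def by auto
  assume "(a, 2*n) \<in> N \<or> (\<exists>x y. oc N x y \<and> a \<noteq> Suc x \<and> a \<noteq> y)"
  thus "\<exists>X Y. oc ?M X Y"
  proof
    assume A: "(a, 2*n) \<in> N"
    have "a < 2 * n" using arc_bounds[OF N A] by auto
    hence "(Suc a, 2*n+1) \<in> ?M" using A E[of a] E[of "2*n"] unfolding ins_def by force
    hence "oc ?M a (2*n+2)" unfolding oc_def ins_def by auto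
    thus ?thesis by blast
  next
    assume "\<exists>x y. oc N x y \<and> a \<noteq> Suc x \<and> a \<noteq> y"
    then obtain x y where xy: "(x,y) \<in> N" "(Suc x, y - 1) \<in> N" "a \<noteq> Suc x" "a \<noteq> y" unfolding oc_def by blast
    have b: "1 \<le> x" "x < y" "y \<le> 2*n" "Suc x < y - 1" "y - 1 \<le> 2*n" "Suc x \<le> 2*n"
      using arc_bounds[OF N xy(1)] arc_bounds[OF N xy(2)] by auto
    have "emb a (2*n+2) (Suc x) = Suc (emb a (2*n+2) x)" "emb a (2*n+2) (y - 1) = emb a (2*n+2) y - 1"
      using E[of x] E[of "Suc x"] E[of y] E[of "y - 1"] b xy(3,4) by auto
    hence "oc ?M (emb a (2*n+2) x) (emb a (2*n+2) y)" using xy(1,2) unfolding oc_def ins_def by force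
    thus ?thesis by blast
  qed
qed


definition one_occ :: "(nat \<times> nat) set \<Rightarrow> bool" where
  "one_occ M \<longleftrightarrow> (\<exists>x y. oc M x y \<and> (\<forall>x' y'. oc M x' y' \<longrightarrow> x' = x \<and> y' = y))"

lemma oc_bounds: "N \<in> matchings n \<Longrightarrow> oc N x y \<Longrightarrow> 1 \<le> x \<and> Suc x < y - 1 \<and> y \<le> 2 * n"
  unfolding oc_def using arc_bounds by fastforce

lemma count1:
  assumes N: "N \<in> matchings n" and n: "1 \<le> n"
  shows "card {a \<in> {1..2*n+1}. \<not> (\<exists>X Y. oc (ins a (2*n+2) N) X Y)}
     = (if \<not> (\<exists>x y. oc N x y) then 2*n else if one_occ N then 2 else 0)"
proof -
  have S: "{a \<in> {1..2*n+1}. \<not> (\<exists>X Y. oc (ins a (2*n+2) N) X Y)}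
     = {a \<in> {1..2*n+1}. (a, 2*n) \<notin> N \<and> (\<forall>x y. oc N x y \<longrightarrow> a = Suc x \<or> a = y)}"
  proof (rule Collect_cong)
    fix a
    show "(a \<in> {1..2*n+1} \<and> \<not> (\<exists>X Y. oc (ins a (2*n+2) N) X Y)) =
      (a \<in> {1..2*n+1} \<and> (a, 2*n) \<notin> N \<and> (\<forall>x y. oc N x y \<longrightarrow> a = Suc x \<or> a = y))"
    proof (cases "a \<in> {1..2*n+1}")
      case True
      then show ?thesis using key1[OF N, of a] by auto
    qed blast
  qed
  show ?thesis
  proof (cases "\<exists>x y. oc N x y")
    case False
    have "2*n \<in> pts N" using N n matchings_iff by auto
    then obtain a0 where a0: "(a0, 2*n) \<in> N" unfolding pts_def using arc_bounds[OF N] by force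
    have "{a \<in> {1..2*n+1}. (a, 2*n) \<notin> N \<and> (\<forall>x y. oc N x y \<longrightarrow> a = Suc x \<or> a = y)}
        = {1..2*n+1} - {a0}"
    proof -
      have "(a, 2*n) \<in> N \<longleftrightarrow> a = a0" for a using arc_disj[OF N a0, of a "2*n"] a0 by blast
      thus ?thesis using False by blast
    qed
    moreover have "a0 \<in> {1..2*n+1}" using arc_bounds[OF N a0] by auto
    ultimately show ?thesis using S False by simp
  next
    case True
    show ?thesis
    proof (cases "one_occ N")
      case True
      then obtain x y where xy: "oc N x y" and u: "\<And>x' y'. oc N x' y' \<Longrightarrow> x' = x \<and> y' = y"
        unfolding one_occ_def by blast
      have b: "1 \<le> x" "Suc x < y - 1" "y \<le> 2 * n" using oc_bounds[OF N xy] by auto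
      have i1: "(x,y) \<in> N" "(Suc x, y - 1) \<in> N" using xy unfolding oc_def by auto
      have "(Suc x, 2*n) \<notin> N"
      proof
        assume h: "(Suc x, 2*n) \<in> N"
        have "y - 1 = 2*n" using arc_disj[OF N i1(2) h] by simp
        thus False using b by simp
      qed
      moreover have "(y, 2*n) \<notin> N"
      proof
        assume h: "(y, 2*n) \<in> N"
        have "x = y" using arc_disj[OF N i1(1) h] by simp
        thus False using b by simp
      qed
      ultimately have "{a \<in> {1..2*n+1}. (a, 2*n) \<notin> N \<and> (\<forall>x y. oc N x y \<longrightarrow> a = Suc x \<or> a = y)}
        = {Suc x, y}"
      proof (intro equalityI subsetI)
        fix a assume "a \<in> {a \<in> {1..2*n+1}. (a, 2*n) \<notin> N \<and> (\<forall>x y. oc N x y \<longrightarrow> a = Suc x \<or> a = y)}"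
        thus "a \<in> {Suc x, y}" using xy by blast
      next
        fix a assume a: "a \<in> {Suc x, y}"
        have "\<forall>x' y'. oc N x' y' \<longrightarrow> a = Suc x' \<or> a = y'" using u a by blast
        moreover have "a \<in> {1..2*n+1}" using a b by auto
        moreover have "(a, 2*n) \<notin> N" using a \<open>(Suc x, 2*n) \<notin> N\<close> \<open>(y, 2*n) \<notin> N\<close> by blast
        ultimately show "a \<in> {a \<in> {1..2*n+1}. (a, 2*n) \<notin> N \<and> (\<forall>x y. oc N x y \<longrightarrow> a = Suc x \<or> a = y)}"
          by blast
      qed
      thus ?thesis using S b True \<open>\<exists>x y. oc N x y\<close> by simp
    next
      case False
      have "{a \<in> {1..2*n+1}. (a, 2*n) \<notin> N \<and> (\<forall>x y. oc N x y \<longrightarrow> a = Suc x \<or> a = y)} = {}"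
      proof (rule ccontr)
        assume "\<not> ?thesis"
        then obtain a where ha: "\<forall>x y. oc N x y \<longrightarrow> a = Suc x \<or> a = y" by blast
        obtain x y where xy: "oc N x y" using True by blast
        obtain x' y' where xy': "oc N x' y'" "\<not> (x' = x \<and> y' = y)" using False xy unfolding one_occ_def by blast
        have b: "1 \<le> x" "Suc x < y - 1" "y \<le> 2 * n" using oc_bounds[OF N xy] by auto
        have b': "1 \<le> x'" "Suc x' < y' - 1" "y' \<le> 2 * n" using oc_bounds[OF N xy'(1)] by auto
        have i: "(x,y) \<in> N" "(Suc x, y - 1) \<in> N" "(x',y') \<in> N" "(Suc x', y' - 1) \<in> N"
          using xy xy' unfolding oc_def by auto
        have "a = Suc x \<or> a = y" "a = Suc x' \<or> a = y'" using ha xy xy'(1) by auto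
        thus False
        proof (elim disjE)
          assume "a = Suc x" "a = Suc x'" thus False using arc_disj[OF N i(1) i(3)] xy' by simp
        next
          assume "a = Suc x" "a = y'" thus False using arc_disj[OF N i(2) i(3)] b by simp
        next
          assume "a = y" "a = Suc x'" thus False using arc_disj[OF N i(1) i(4)] b' by simp
        next
          assume "a = y" "a = y'" thus False using arc_disj[OF N i(1) i(3)] xy' by simp
        qed
      qed
      thus ?thesis using S True False by simp
    qed
  qed
qed


lemma bij_filter_card: assumes "bij_betw f X Y" shows "card {x\<in>X. Q (f x)} = card {y\<in>Y. Q y}"
proof -
  have "f ` {x\<in>X. Q (f x)} = {y\<in>Y. Q y}" using bij_betw_imp_surj_on[OF assms] by blast
  moreover have "inj_on f {x\<in>X. Q (f x)}" using bij_betw_imp_inj_on[OF assms] inj_on_subset by fastforce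
  ultimately show ?thesis using card_image by fastforce
qed

lemma card_swap: assumes "finite A" "finite B"
  shows "(\<Sum>a\<in>A. card {b\<in>B. R a b}) = (\<Sum>b\<in>B. card {a\<in>A. R a b})"
proof -
  have "(\<Sum>a\<in>A. card {b\<in>B. R a b}) = (\<Sum>a\<in>A. \<Sum>b\<in>B. if R a b then 1 else 0)"
    using assms by (simp add: sum.If_cases Int_def)
  also have "\<dots> = (\<Sum>b\<in>B. \<Sum>a\<in>A. if R a b then 1 else 0)" by (rule sum.swap)
  also have "\<dots> = (\<Sum>b\<in>B. card {a\<in>A. R a b})"
    using assms by (simp add: sum.If_cases Int_def)
  finally show ?thesis .
qed

definition bb :: "nat \<Rightarrow> nat" where
  "bb n = card {M \<in> matchings n. one_occ M}"

lemma a0_alt: "a0 n = card {M \<in> matchings n. \<not> (\<exists>x y. oc M x y)}"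
  unfolding a0_def using h_iff matchings_iff by (metis (no_types, lifting))

lemma part1: assumes n: "1 \<le> n" shows "a0 (Suc n) = 2 * n * a0 n + 2 * bb n"
proof -
  define L where "L = 2*n+2"
  define P where "P M \<longleftrightarrow> \<not> (\<exists>x y. oc M x y)" for M
  define B where "B a = {M \<in> matchings (Suc n). (a, L) \<in> M \<and> P M}" for a
  have U: "{M \<in> matchings (Suc n). P M} = (\<Union>a\<in>{1..2*n+1}. B a)"
  proof (intro equalityI subsetI)
    fix M assume M: "M \<in> {M \<in> matchings (Suc n). P M}"
    hence "L \<in> pts M" using matchings_iff L_def by auto
    then obtain a where "(a, L) \<in> M" unfolding pts_def using arc_bounds M L_def by fastforce
    moreover hence "a \<in> {1..2*n+1}" using arc_bounds M L_def by fastforce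
    ultimately show "M \<in> (\<Union>a\<in>{1..2*n+1}. B a)" using M B_def by blast
  qed (auto simp: B_def)
  have fin: "finite (B a)" for a using finite_matchings unfolding B_def by simp
  have disj: "\<forall>a\<in>{1..2*n+1}. \<forall>a'\<in>{1..2*n+1}. a \<noteq> a' \<longrightarrow> B a \<inter> B a' = {}"
    unfolding B_def using arc_disj by blast
  have "a0 (Suc n) = card {M \<in> matchings (Suc n). P M}" unfolding a0_alt P_def by simp
  also have "\<dots> = (\<Sum>a\<in>{1..2*n+1}. card (B a))" unfolding U using fin disj by (simp add: card_UN_disjoint)
  also have "\<dots> = (\<Sum>a\<in>{1..2*n+1}. card {N \<in> matchings n. P (ins a L N)})"
  proof (rule sum.cong[OF refl])
    fix a assume a: "a \<in> {1..2*n+1}"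
    have "bij_betw (ins a L) (matchings n) {M \<in> matchings (Suc n). (a,L) \<in> M}"
      using ins_bij a L_def by simp
    from bij_filter_card[OF this, of P] show "card (B a) = card {N \<in> matchings n. P (ins a L N)}"
      unfolding B_def by (simp add: conj_assoc)
  qed
  also have "\<dots> = (\<Sum>N\<in>matchings n. card {a\<in>{1..2*n+1}. P (ins a L N)})"
    by (rule card_swap) (simp_all add: finite_matchings)
  also have "\<dots> = (\<Sum>N\<in>matchings n. (if P N then 2*n else 0) + (if one_occ N then 2 else 0))"
  proof (rule sum.cong[OF refl])
    fix N assume N: "N \<in> matchings n"
    have "one_occ N \<Longrightarrow> \<not> P N" unfolding one_occ_def P_def by blast
    thus "card {a\<in>{1..2*n+1}. P (ins a L N)} = (if P N then 2*n else 0) + (if one_occ N then 2 else 0)"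
      using count1[OF N n] unfolding P_def L_def by auto
  qed
  also have "\<dots> = 2 * n * card {N \<in> matchings n. P N} + 2 * card {N \<in> matchings n. one_occ N}"
    by (simp add: sum.distrib sum.If_cases finite_matchings Int_def mult.commute)
  finally show ?thesis unfolding a0_alt bb_def P_def by simp
qed


lemma key2:
  assumes N: "N \<in> matchings m" and cd: "1 \<le> c" "c < d" "d \<le> 2 * m + 2"
  shows "((c - 1, d + 1) \<in> ins c d N \<and> one_occ (ins c d N)) \<longleftrightarrow>
         ((c - 1, d - 1) \<in> N \<and> \<not> (\<exists>x y. oc N x y))"
proof
  let ?M = "ins c d N"
  assume A: "(c - 1, d + 1) \<in> ?M \<and> one_occ ?M"
  have "(c - 1, d + 1) \<noteq> (c, d)" by simp
  then obtain x y where xy: "(x,y) \<in> N" "c - 1 = emb c d x" "d + 1 = emb c d y"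
    using A unfolding ins_def by auto
  have bx: "1 \<le> x" "x < y" "y \<le> 2*m" using arc_bounds[OF N xy(1)] by auto
  have "x = c - 1" "y = d - 1" using xy(2,3) bx cd unfolding emb_def by (auto split: if_splits)
  hence cd1: "(c - 1, d - 1) \<in> N" using xy by simp
  have c2: "2 \<le> c" "c < d" "d - 1 \<le> 2 * m" using arc_bounds[OF N cd1] by auto
  have o1: "oc ?M (c - 1) (d + 1)" using A c2 unfolding oc_def ins_def by auto
  have U: "X = c - 1 \<and> Y = d + 1" if "oc ?M X Y" for X Y
    using A o1 that unfolding one_occ_def by metis
  have nc: "(c, d - 2) \<notin> N"
  proof
    assume h: "(c, d - 2) \<in> N"
    have b: "c < d - 2" using arc_bounds[OF N h] by auto
    have "emb c d c = Suc c" "emb c d (d - 2) = d - 1" using b unfolding emb_def by auto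
    hence "(Suc c, d - 1) \<in> ?M" using h unfolding ins_def by force
    hence "oc ?M c d" unfolding oc_def ins_def by auto
    thus False using U by force
  qed
  have "\<not> (\<exists>x y. oc N x y)"
  proof
    assume "\<exists>x y. oc N x y"
    then obtain x y where o: "(x,y) \<in> N" "(Suc x, y - 1) \<in> N" unfolding oc_def by blast
    have b: "1 \<le> x" "Suc x < y - 1" "y \<le> 2 * m" using oc_bounds[OF N] o unfolding oc_def by blast+
    have xc: "x = c - 1 \<Longrightarrow> False"
    proof -
      assume "x = c - 1"
      hence "y = d - 1" using arc_disj[OF N o(1) cd1] by simp
      thus False using o(2) nc c2 \<open>x = c - 1\<close> by (simp add: Suc_diff_1 numeral_2_eq_2)
    qed
    consider "x = c - 1" | "x = d - 2 \<and> c \<le> x" | "y = c" | "y = d - 1"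
      | "x \<noteq> c - 1" "\<not> (x = d - 2 \<and> c \<le> x)" "y \<noteq> c" "y \<noteq> d - 1" by blast
    thus False
    proof cases
      case 1 thus False using xc by simp
    next
      case 2
      hence "Suc x = d - 1" using c2 by simp
      hence "d - 1 = c - 1" using arc_disj[OF N o(2) cd1] by simp
      thus False using c2 by simp
    next
      case 3
      hence "y - 1 = c - 1" by simp
      hence "Suc x = c - 1 \<and> y - 1 = d - 1" using arc_disj[OF N o(2) cd1] by simp
      thus False using c2 3 by linarith
    next
      case 4
      hence "x = c - 1" using arc_disj[OF N o(1) cd1] by simp
      thus False using xc by simp
    next
      case 5
      have e: "emb c d (Suc x) = Suc (emb c d x)" "emb c d (y - 1) = emb c d y - 1"
        using 5 b c2 unfolding emb_def by auto
      have "oc ?M (emb c d x) (emb c d y)" using o e unfolding oc_def ins_def by force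
      hence "emb c d x = c - 1" using U by blast
      hence "x = c - 1" using c2 unfolding emb_def by (auto split: if_splits)
      thus False using xc by simp
    qed
  qed
  thus "(c - 1, d - 1) \<in> N \<and> \<not> (\<exists>x y. oc N x y)" using cd1 by simp
next
  let ?M = "ins c d N"
  assume A: "(c - 1, d - 1) \<in> N \<and> \<not> (\<exists>x y. oc N x y)"
  hence cd1: "(c - 1, d - 1) \<in> N" and av: "\<And>x y. \<not> oc N x y" by auto
  have c2: "2 \<le> c" "c < d" "d - 1 \<le> 2 * m" using arc_bounds[OF N cd1] by auto
  have "emb c d (c - 1) = c - 1" "emb c d (d - 1) = d + 1" using c2 unfolding emb_def by auto
  hence m1: "(c - 1, d + 1) \<in> ?M" using cd1 unfolding ins_def by force
  have o1: "oc ?M (c - 1) (d + 1)" using m1 c2 unfolding oc_def ins_def by auto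
  have U: "X = c - 1 \<and> Y = d + 1" if o: "oc ?M X Y" for X Y
  proof -
    have o1: "(X,Y) \<in> ?M" and o2: "(Suc X, Y - 1) \<in> ?M" using o unfolding oc_def by auto
    from o1 consider "X = c" "Y = d" | x y where "(x,y) \<in> N" "X = emb c d x" "Y = emb c d y"
      unfolding ins_def by auto
    thus ?thesis
    proof cases
      case 1
      with o2 obtain x y where xy: "(x,y) \<in> N" "Suc c = emb c d x" "d - 1 = emb c d y"
        unfolding ins_def by auto
      have b: "1 \<le> x" "x < y" using arc_bounds[OF N xy(1)] by auto
      have "x = c" "y = d - 2" using xy(2,3) b c2 unfolding emb_def by (auto split: if_splits)
      hence "oc N (c - 1) (d - 1)" using cd1 xy(1) c2 unfolding oc_def
        by (simp add: Suc_diff_1 numeral_2_eq_2)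
      thus ?thesis using av by blast
    next
      case (2 x y)
      have b: "1 \<le> x" "x < y" using arc_bounds[OF N 2(1)] by auto
      have Y1: "1 \<le> Y" using 2 b unfolding emb_def by auto
      from o2 consider "Suc X = c" "Y - 1 = d" | x' y' where "(x',y') \<in> N" "Suc X = emb c d x'" "Y - 1 = emb c d y'"
        unfolding ins_def by auto
      thus ?thesis
      proof cases
        case 1 thus ?thesis using Y1 by auto
      next
        case (2 x' y')
        note xy = \<open>(x,y) \<in> N\<close> \<open>X = emb c d x\<close> \<open>Y = emb c d y\<close>
        have "x' = Suc x" by (rule emb_succ[OF cd(2)]) (use 2 xy in simp)
        moreover have "emb c d y = Suc (emb c d y')" using 2 xy Y1 by simp
        hence "y = Suc y'" by (rule emb_succ[OF cd(2)])
        ultimately have "oc N x y" using 2 xy unfolding oc_def by simp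
        thus ?thesis using av by blast
      qed
    qed
  qed
  have "one_occ ?M" unfolding one_occ_def using o1 U by blast
  thus "(c - 1, d + 1) \<in> ?M \<and> one_occ ?M" using m1 by simp
qed


lemma part2: "bb (Suc m) = m * a0 m"
proof -
  define Q where "Q = {p :: nat \<times> nat. 1 \<le> fst p \<and> fst p < snd p \<and> snd p \<le> 2*m+2}"
  define B where "B p = {M \<in> matchings (Suc m). (fst p, snd p) \<in> M \<and> ((fst p - 1, snd p + 1) \<in> M \<and> one_occ M)}" for p
  define av where "av N \<longleftrightarrow> \<not> (\<exists>x y. oc N x y)" for N
  have finQ: "finite Q"
    by (rule finite_subset[of _ "{1..2*m+2} \<times> {1..2*m+2}"]) (auto simp: Q_def)
  have U: "{M \<in> matchings (Suc m). one_occ M} = (\<Union>p\<in>Q. B p)"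
  proof (intro equalityI subsetI)
    fix M assume M: "M \<in> {M \<in> matchings (Suc m). one_occ M}"
    then obtain x y where o: "oc M x y" unfolding one_occ_def by blast
    hence i: "(x,y) \<in> M" "(Suc x, y - 1) \<in> M" unfolding oc_def by auto
    have b: "1 \<le> x" "Suc x < y - 1" "y \<le> 2 * Suc m" using oc_bounds[OF _ o, of "Suc m"] M by auto
    have "(Suc x, y - 1) \<in> Q" using b unfolding Q_def by auto
    moreover have "M \<in> B (Suc x, y - 1)" unfolding B_def using M i b
      by (simp add: Suc_diff_1)
    ultimately show "M \<in> (\<Union>p\<in>Q. B p)" by blast
  qed (auto simp: B_def)
  have fin: "finite (B p)" for p using finite_matchings unfolding B_def by simp
  have disj: "\<forall>p\<in>Q. \<forall>p'\<in>Q. p \<noteq> p' \<longrightarrow> B p \<inter> B p' = {}"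
  proof (intro ballI impI)
    fix p p' assume p: "p \<in> Q" and p': "p' \<in> Q" and ne: "p \<noteq> p'"
    show "B p \<inter> B p' = {}"
    proof (rule ccontr)
      assume "B p \<inter> B p' \<noteq> {}"
      then obtain M where M1: "M \<in> B p" and M2: "M \<in> B p'" by blast
      have "oc M (fst p - 1) (snd p + 1)" using M1 p unfolding B_def Q_def oc_def by auto
      moreover have "oc M (fst p' - 1) (snd p' + 1)" using M2 p' unfolding B_def Q_def oc_def by auto
      moreover have "one_occ M" using M1 unfolding B_def by simp
      ultimately have "fst p - 1 = fst p' - 1" "snd p + 1 = snd p' + 1" unfolding one_occ_def by metis+
      hence "p = p'" using p p' unfolding Q_def by (auto simp: prod_eq_iff)
      thus False using ne by simp
    qed
  qed
  have "bb (Suc m) = (\<Sum>p\<in>Q. card (B p))" unfolding bb_def U using fin disj finQ by (simp add: card_UN_disjoint)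
  also have "\<dots> = (\<Sum>p\<in>Q. card {N \<in> matchings m. (fst p - 1, snd p - 1) \<in> N \<and> av N})"
  proof (rule sum.cong[OF refl])
    fix p assume p: "p \<in> Q"
    have cd: "1 \<le> fst p" "fst p < snd p" "snd p \<le> 2 * m + 2" using p unfolding Q_def by auto
    have "card (B p) = card {N \<in> matchings m. (fst p - 1, snd p + 1) \<in> ins (fst p) (snd p) N \<and> one_occ (ins (fst p) (snd p) N)}"
      using bij_filter_card[OF ins_bij[OF cd], of "\<lambda>M. (fst p - 1, snd p + 1) \<in> M \<and> one_occ M"]
      unfolding B_def by (simp add: conj_assoc)
    also have "\<dots> = card {N \<in> matchings m. (fst p - 1, snd p - 1) \<in> N \<and> av N}"
      using key2[OF _ cd] unfolding av_def by (metis (no_types, lifting))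
    finally show "card (B p) = card {N \<in> matchings m. (fst p - 1, snd p - 1) \<in> N \<and> av N}" .
  qed
  also have "\<dots> = (\<Sum>N\<in>matchings m. card {p\<in>Q. (fst p - 1, snd p - 1) \<in> N \<and> av N})"
    by (rule card_swap) (simp_all add: finQ finite_matchings)
  also have "\<dots> = (\<Sum>N\<in>matchings m. if av N then m else 0)"
  proof (rule sum.cong[OF refl])
    fix N assume N: "N \<in> matchings m"
    show "card {p\<in>Q. (fst p - 1, snd p - 1) \<in> N \<and> av N} = (if av N then m else 0)"
    proof (cases "av N")
      case True
      have "{p\<in>Q. (fst p - 1, snd p - 1) \<in> N \<and> av N} = (\<lambda>(x,y). (Suc x, Suc y)) ` N"
      proof (intro equalityI subsetI)
        fix p assume "p \<in> {p\<in>Q. (fst p - 1, snd p - 1) \<in> N \<and> av N}"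
        hence p: "p \<in> Q" "(fst p - 1, snd p - 1) \<in> N" by auto
        have "1 \<le> fst p - 1" using arc_bounds[OF N p(2)] by simp
        hence "p = (Suc (fst p - 1), Suc (snd p - 1))" using p(1) unfolding Q_def by (auto simp: prod_eq_iff)
        thus "p \<in> (\<lambda>(x,y). (Suc x, Suc y)) ` N" using p(2) by force
      next
        fix p assume "p \<in> (\<lambda>(x,y). (Suc x, Suc y)) ` N"
        then obtain x y where "(x,y) \<in> N" "p = (Suc x, Suc y)" by auto
        thus "p \<in> {p\<in>Q. (fst p - 1, snd p - 1) \<in> N \<and> av N}"
          using arc_bounds[OF N] True unfolding Q_def by fastforce
      qed
      moreover have "inj_on (\<lambda>(x,y). (Suc x, Suc y)) N" unfolding inj_on_def by auto
      moreover have "card N = m" using N unfolding matchings_def by simp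
      ultimately show ?thesis using True card_image by metis
    qed simp
  qed
  also have "\<dots> = m * a0 m"
    unfolding a0_alt av_def by (simp add: sum.If_cases finite_matchings Int_def mult.commute)
  finally show ?thesis .
qed


lemma matchings1: "matchings 1 = {{(1,2)}}"
proof (intro equalityI subsetI)
  fix M assume M: "M \<in> matchings 1"
  hence "M \<subseteq> {(1,2)}" using arc_bounds[OF M] by force
  moreover have "card M = 1" using M unfolding matchings_def by simp
  ultimately have "M = {} \<or> M = {(1,2)}" using subset_singletonD by blast
  with \<open>card M = 1\<close> show "M \<in> {{(1,2)}}" by auto
next
  fix M assume "M \<in> {{(1::nat,2::nat)}}"
  hence M: "M = {(1,2)}" by simp
  have "wfm M" unfolding M wfm_def by auto
  moreover have "pts M = {1..2*1}"
  proof -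
    have "{1..2*1::nat} = {1,2}" by auto
    thus ?thesis unfolding M pts_def by (simp add: insert_commute)
  qed
  ultimately show "M \<in> matchings 1" using matchings_iff by blast
qed

theorem corollary2:
  shows "a0 1 = 1 \<and> a0 2 = 2 \<and>
    (\<forall>n::nat. n \<ge> 2 \<longrightarrow> a0 (n + 1) = 2 * n * a0 n + 2 * (n - 1) * a0 (n - 1))"
proof -
  have noc: "\<not> oc {(1::nat,2::nat)} x y" for x y unfolding oc_def by auto
  have "{M \<in> matchings 1. \<not> (\<exists>x y. oc M x y)} = {{(1,2)}}" unfolding matchings1 using noc by auto
  hence A1: "a0 1 = 1" unfolding a0_alt by simp
  have B1: "bb 1 = 0" unfolding bb_def matchings1 one_occ_def using noc by simp
  have A2: "a0 2 = 2" using part1[of 1] A1 B1 by (simp add: numeral_2_eq_2)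
  have "a0 (n + 1) = 2 * n * a0 n + 2 * (n - 1) * a0 (n - 1)" if n: "n \<ge> 2" for n
  proof -
    have "bb n = (n - 1) * a0 (n - 1)" using part2[of "n - 1"] n by (simp add: Suc_diff_1)
    thus ?thesis using part1[of n] n by simp
  qed
  thus ?thesis using A1 A2 by blast
qed

end
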